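(* Fix real parameters $a\neq 0$, $b>0$, $c>0$ and $0<\theta<c$, let $P(x,y)=\tfrac12+(x-y)\bigl(c-b(x+y)+axy\bigr)$, $\kappa=b/a$, $\zeta=\frac{b^2-a(c-\theta)}{a^2}$. For an opponent effort $y\ge 0$ with $ay<b$, let $$x^{BR}(y)=\frac{ay^2-(c-\theta)}{2(ay-b)}$$ denote the interior best response, i.e. the unique maximizer over $x\in\mathbb R$ of the strictly concave function $x\mapsto P(x,y)-\theta x$. Under empowerment ($a<0$) the condition $ay<b$ holds for every $y\ge 0$, and $x^{BR}$ is convex on $[0,\infty)$. Under suppression ($a>0$) the condition restricts $y$ to $[0,\kappa)$, and on $[0,\kappa)$ the function $x^{BR}$ is concave if $\zeta>0$ and convex if $\zeta<0$. The change of curvature occurs exactly at $\zeta=0$.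
   Context: $x^{BR}(y)$ is viewed as a function of the opponent's effort $y$; convexity/concavity refer to the sign of $d^2x^{BR}/dy^2$. *)

theory Defs
  imports "HOL-Analysis.Analysis"
begin

definition P :: "real \<Rightarrow> real \<Rightarrow> real \<Rightarrow> real \<Rightarrow> real \<Rightarrow> real" where
  "P a b c x y = 1/2 + (x - y) * (c - b * (x + y) + a * x * y)"

definition xBR :: "real \<Rightarrow> real \<Rightarrow> real \<Rightarrow> real \<Rightarrow> real \<Rightarrow> real" where
  "xBR a b c \<theta> y = (a * y^2 - (c - \<theta>)) / (2 * (a * y - b))"

definition kappa :: "real \<Rightarrow> real \<Rightarrow> real" where
  "kappa a b = b / a"

definition zeta :: "real \<Rightarrow> real \<Rightarrow> real \<Rightarrow> real \<Rightarrow> real" where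
  "zeta a b c \<theta> = (b^2 - a * (c - \<theta>)) / a^2"

end

theory Submission
  imports Defs
begin

lemma e1:
  fixes a b k y :: real
  assumes ne: "a*y - b \<noteq> 0"
  shows "((2*a*y) * (2*(a*y-b)) - (a*y^2-k) * (2*a)) / (2*(a*y-b))^2
      = 1/2 - (b^2 - a*k)/(2*(a*y-b)^2)"
proof -
  define D where "D = (a*y-b)^2"
  have q: "D \<noteq> 0" using ne D_def by simp
  have n: "(2*a*y) * (2*(a*y-b)) - (a*y^2-k) * (2*a) = 2*(D - (b^2 - a*k))"
    unfolding D_def by (simp add: algebra_simps power2_eq_square)
  have d: "(2*(a*y-b))^2 = 2*(2*D)" unfolding D_def by (simp add: power2_eq_square algebra_simps)
  have "((2*a*y) * (2*(a*y-b)) - (a*y^2-k) * (2*a)) / (2*(a*y-b))^2 = (D - (b^2 - a*k)) / (2*D)"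
    unfolding n d by (rule mult_divide_mult_cancel_left) simp
  also have "\<dots> = 1/2 - (b^2 - a*k)/(2*D)" using q by (simp add: diff_divide_distrib)
  finally show ?thesis unfolding D_def .
qed

lemma xBR_D1:
  fixes a b c t y :: real
  assumes "a*y \<noteq> b"
  shows "(xBR a b c t has_real_derivative (1/2 - (b^2 - a*(c-t))/(2*(a*y-b)^2))) (at y)"
proof -
  have ne: "a*y - b \<noteq> 0" using assms by simp
  have "((\<lambda>y. (a * y^2 - (c - t)) / (2 * (a * y - b))) has_real_derivative
     ((2*a*y) * (2*(a*y-b)) - (a*y^2-(c-t)) * (2*a)) / (2*(a*y-b))^2) (at y)"
    apply (rule DERIV_cong)
     apply (rule DERIV_divide)
       apply (rule derivative_intros)+
    using ne apply simp
    apply (simp add: power2_eq_square)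
    done
  moreover have "((2*a*y) * (2*(a*y-b)) - (a*y^2-(c-t)) * (2*a)) / (2*(a*y-b))^2
      = 1/2 - (b^2 - a*(c-t))/(2*(a*y-b)^2)"
    by (rule e1[OF ne])
  ultimately show ?thesis unfolding xBR_def[abs_def] by simp
qed

lemma e2':
  fixes a C u y :: real
  assumes u: "u \<noteq> 0"
  shows "0 - (0 * (2 * u^2) - C * (0 * u^2 + real 2 * ((0 * y + 1 * a - 0) * u ^ (2 - Suc 0)) * 2)) /
     (2 * u^2 * (2 * u^2)) = a * C / u ^ 3"
proof -
  have "0 - (0 * (2 * u^2) - C * (0 * u^2 + real 2 * ((0 * y + 1 * a - 0) * u ^ (2 - Suc 0)) * 2)) /
     (2 * u^2 * (2 * u^2)) = ((4*u) * (a*C)) / ((4*u) * u^3)"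
  proof -
    have n1: "0 - (0 * (2 * u^2) - C * (0 * u^2 + real 2 * ((0 * y + 1 * a - 0) * u ^ (2 - Suc 0)) * 2)) = (4*u) * (a*C)"
      by (simp add: algebra_simps)
    have n2: "2 * u^2 * (2 * u^2) = (4*u) * u^3" by (simp add: power2_eq_square power3_eq_cube algebra_simps)
    have "0 - (0 * (2 * u^2) - C * (0 * u^2 + real 2 * ((0 * y + 1 * a - 0) * u ^ (2 - Suc 0)) * 2)) /
     (2 * u^2 * (2 * u^2)) = (0 - (0 * (2 * u^2) - C * (0 * u^2 + real 2 * ((0 * y + 1 * a - 0) * u ^ (2 - Suc 0)) * 2))) /
     (2 * u^2 * (2 * u^2))" by simp
    also have "\<dots> = ((4*u) * (a*C)) / ((4*u) * u^3)" by (simp only: n1 n2)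
    finally show ?thesis .
  qed
  also have "\<dots> = a*C/u^3" using u by (rule_tac mult_divide_mult_cancel_left) simp
  finally show ?thesis .
qed

lemma D1_D2:
  fixes a b k y :: real
  assumes "a*y \<noteq> b"
  shows "((\<lambda>y. 1/2 - (b^2 - a*k)/(2*(a*y-b)^2)) has_real_derivative (a*(b^2 - a*k)/(a*y-b)^3)) (at y)"
proof -
  have ne: "a*y - b \<noteq> 0" using assms by simp
  show ?thesis
  apply (rule DERIV_cong)
   apply (rule DERIV_diff)
    apply (rule DERIV_const)
   apply (rule DERIV_divide)
     apply (rule DERIV_const)
    apply (rule derivative_intros)+
  using ne apply simp
  by (rule e2'[OF ne])
qed

lemma xBR_dd:
  fixes a b c t y :: real
  assumes "a*y \<noteq> b"
  shows "deriv (deriv (xBR a b c t)) y = a*(b^2 - a*(c-t))/(a*y-b)^3"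
proof -
  let ?S = "{y. a*y \<noteq> b}"
  have op: "open ?S" by (rule open_Collect_neq; intro continuous_intros)
  have eq: "deriv (xBR a b c t) z = 1/2 - (b^2 - a*(c-t))/(2*(a*z-b)^2)" if "z \<in> ?S" for z
    using xBR_D1[of a z b c t] that by (simp add: DERIV_imp_deriv)
  have "(deriv (xBR a b c t) has_real_derivative a*(b^2 - a*(c-t))/(a*y-b)^3) (at y)"
    by (rule has_field_derivative_transform_within_open[OF D1_D2[OF assms] op])
       (use assms eq in auto)
  thus ?thesis by (rule DERIV_imp_deriv)
qed

lemma g_form:
  fixes a b c t x y :: real
  shows "P a b c x y - t * x = (a*y-b)*x^2 + (c-t-a*y^2)*x + (1/2 - y*(c-b*y))"
  unfolding P_def by (simp add: algebra_simps power2_eq_square)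

lemma g_deriv:
  fixes a b c t x y :: real
  shows "((\<lambda>x. P a b c x y - t * x) has_real_derivative (2*(a*y-b)*x + (c-t-a*y^2))) (at x)"
proof -
  have "((\<lambda>x. (a*y-b)*x^2 + (c-t-a*y^2)*x + (1/2 - y*(c-b*y))) has_real_derivative (2*(a*y-b)*x + (c-t-a*y^2))) (at x)"
    by (rule derivative_eq_intros refl | simp)+
  thus ?thesis by (simp add: g_form)
qed

lemma part1:
  fixes a b c t y :: real
  assumes "a*y < b"
  shows "(\<forall>x. x \<noteq> xBR a b c t y \<longrightarrow>
             P a b c x y - t * x < P a b c (xBR a b c t y) y - t * xBR a b c t y)
      \<and> (\<forall>x. ((\<lambda>x. P a b c x y - t * x) has_real_derivative 0) (at x)
               \<longleftrightarrow> x = xBR a b c t y)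
      \<and> (\<forall>x. deriv (deriv (\<lambda>x. P a b c x y - t * x)) x < 0)"
proof -
  define A where "A = a*y-b"
  define B where "B = c-t-a*y^2"
  have A: "A < 0" using assms A_def by simp
  have xs: "xBR a b c t y = - B / (2*A)" unfolding xBR_def A_def B_def by (simp add: field_simps)
  have sq: "P a b c x y - t * x = A*(x - xBR a b c t y)^2 + (P a b c (xBR a b c t y) y - t * xBR a b c t y)" for x
    unfolding g_form xs A_def[symmetric] B_def[symmetric] using A
    by (simp add: field_simps power2_eq_square)
  have 1: "P a b c x y - t * x < P a b c (xBR a b c t y) y - t * xBR a b c t y" if "x \<noteq> xBR a b c t y" for x
  proof -
    have "(x - xBR a b c t y)^2 > 0" using that by simp
    hence "A*(x - xBR a b c t y)^2 < 0" using A by (simp add: mult_neg_pos)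
    thus ?thesis using sq[of x] by linarith
  qed
  have 2: "((\<lambda>x. P a b c x y - t * x) has_real_derivative 0) (at x) \<longleftrightarrow> x = xBR a b c t y" for x
  proof
    assume h: "((\<lambda>x. P a b c x y - t * x) has_real_derivative 0) (at x)"
    have "2*A*x + B = 0" using DERIV_unique[OF g_deriv h] A_def B_def by simp
    moreover have "A * (2 * xBR a b c t y) = - B" using A xs by (simp add: field_simps)
    ultimately have "A * (2*x) = A * (2 * xBR a b c t y)" by (simp add: algebra_simps)
    thus "x = xBR a b c t y" using A by simp
  next
    assume "x = xBR a b c t y"
    hence "2*A*x + B = 0" using A xs by (simp add: field_simps)
    thus "((\<lambda>x. P a b c x y - t * x) has_real_derivative 0) (at x)"
      using g_deriv[of a b c y t x] A_def B_def by simp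
  qed
  have d1: "deriv (\<lambda>x. P a b c x y - t * x) = (\<lambda>x. 2*A*x + B)"
    using g_deriv A_def B_def by (intro ext) (simp add: DERIV_imp_deriv)
  have "((\<lambda>x. 2*A*x + B) has_real_derivative 2*A) (at x)" for x
    by (rule derivative_eq_intros refl | simp)+
  hence 3: "deriv (deriv (\<lambda>x. P a b c x y - t * x)) x < 0" for x
    unfolding d1 using A DERIV_imp_deriv by (metis mult_less_0_iff zero_less_numeral)
  show ?thesis using 1 2 3 by blast
qed

theorem corollary1:
  fixes a b c \<theta> :: real
  assumes "a \<noteq> 0" and "b > 0" and "c > 0" and "0 < \<theta>" and "\<theta> < c"
  shows
    \<comment> \<open>x^BR(y) is the unique maximiser of the strictly concave map x \<mapsto> P(x,y) - theta x\<close>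
    "(\<forall>y\<ge>0. a * y < b \<longrightarrow>
        (\<forall>x. x \<noteq> xBR a b c \<theta> y \<longrightarrow>
             P a b c x y - \<theta> * x < P a b c (xBR a b c \<theta> y) y - \<theta> * xBR a b c \<theta> y)
      \<and> (\<forall>x. ((\<lambda>x. P a b c x y - \<theta> * x) has_real_derivative 0) (at x)
               \<longleftrightarrow> x = xBR a b c \<theta> y)
      \<and> (\<forall>x. deriv (deriv (\<lambda>x. P a b c x y - \<theta> * x)) x < 0))
   \<and> \<comment> \<open>empowerment\<close>
    (a < 0 \<longrightarrow>
        (\<forall>y\<ge>0. a * y < b)
      \<and> convex_on {0..} (xBR a b c \<theta>)
      \<and> (\<forall>y\<ge>0. deriv (deriv (xBR a b c \<theta>)) y > 0))
   \<and> \<comment> \<open>suppression\<close>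
    (a > 0 \<longrightarrow>
        (\<forall>y\<ge>0. a * y < b \<longleftrightarrow> y < kappa a b)
      \<and> (zeta a b c \<theta> > 0 \<longrightarrow> concave_on {0..<kappa a b} (xBR a b c \<theta>)
            \<and> (\<forall>y\<in>{0..<kappa a b}. deriv (deriv (xBR a b c \<theta>)) y < 0))
      \<and> (zeta a b c \<theta> < 0 \<longrightarrow> convex_on {0..<kappa a b} (xBR a b c \<theta>)
            \<and> (\<forall>y\<in>{0..<kappa a b}. deriv (deriv (xBR a b c \<theta>)) y > 0))
      \<and> (zeta a b c \<theta> = 0 \<longrightarrow>
            (\<forall>y\<in>{0..<kappa a b}. deriv (deriv (xBR a b c \<theta>)) y = 0)))"
proof -
  let ?D1 = "\<lambda>y. 1/2 - (b^2 - a*(c-\<theta>))/(2*(a*y-b)^2)"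
  let ?D2 = "\<lambda>y::real. a*(b^2 - a*(c-\<theta>))/(a*y-b)^3"
  have der1: "(xBR a b c \<theta> has_real_derivative ?D1 y) (at y)" if "a*y < b" for y
    using xBR_D1[of a y b c \<theta>] that by simp
  have der2: "(?D1 has_real_derivative ?D2 y) (at y)" if "a*y < b" for y
    using D1_D2[of a y b "c-\<theta>"] that by simp
  have der1n: "((\<lambda>x. - xBR a b c \<theta> x) has_real_derivative - ?D1 y) (at y)" if "a*y < b" for y
    using der1[OF that] by (rule derivative_intros)
  have der2n: "((\<lambda>x. - ?D1 x) has_real_derivative - ?D2 y) (at y)" if "a*y < b" for y
    using der2[OF that] by (rule derivative_intros)
  have cube: "(a*y-b)^3 < 0" if "a*y < b" for y
  proof -
    have "a*y - b < 0" using that by simp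
    thus ?thesis by (simp add: power_less_zero_eq)
  qed
  have dd: "deriv (deriv (xBR a b c \<theta>)) y = ?D2 y" if "a*y < b" for y
    using xBR_dd[of a y b c \<theta>] that by simp
  have a2: "a^2 > 0" using assms(1) by simp
  have zeta_pos: "zeta a b c \<theta> > 0 \<longleftrightarrow> b^2 - a*(c-\<theta>) > 0"
    and zeta_neg: "zeta a b c \<theta> < 0 \<longleftrightarrow> b^2 - a*(c-\<theta>) < 0"
    and zeta_0: "zeta a b c \<theta> = 0 \<longleftrightarrow> b^2 - a*(c-\<theta>) = 0"
    using a2 unfolding zeta_def by (auto simp: zero_less_divide_iff divide_less_0_iff)
  have P1: "\<forall>y\<ge>0. a * y < b \<longrightarrow>
        (\<forall>x. x \<noteq> xBR a b c \<theta> y \<longrightarrow>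
             P a b c x y - \<theta> * x < P a b c (xBR a b c \<theta> y) y - \<theta> * xBR a b c \<theta> y)
      \<and> (\<forall>x. ((\<lambda>x. P a b c x y - \<theta> * x) has_real_derivative 0) (at x)
               \<longleftrightarrow> x = xBR a b c \<theta> y)
      \<and> (\<forall>x. deriv (deriv (\<lambda>x. P a b c x y - \<theta> * x)) x < 0)"
    by (intro allI impI, rule part1)
  have P2: "a < 0 \<longrightarrow>
        (\<forall>y\<ge>0. a * y < b)
      \<and> convex_on {0..} (xBR a b c \<theta>)
      \<and> (\<forall>y\<ge>0. deriv (deriv (xBR a b c \<theta>)) y > 0)"
  proof
    assume a: "a < 0"
    have lt: "a*y < b" if "y \<ge> 0" for y
    proof -
      have "a*y \<le> 0" using a that by (simp add: mult_nonpos_nonneg)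
      thus ?thesis using assms(2) by linarith
    qed
    have num: "b^2 - a*(c-\<theta>) > 0"
    proof -
      have "a*(c-\<theta>) < 0" using a assms by (simp add: mult_neg_pos)
      moreover have "b^2 > 0" using assms by simp
      ultimately show ?thesis by linarith
    qed
    have pos: "?D2 y > 0" if "y \<ge> 0" for y
      using cube[OF lt[OF that]] num a by (simp add: divide_neg_neg mult_neg_pos)
    have "convex_on {0..} (xBR a b c \<theta>)"
      by (rule f''_ge0_imp_convex[where f'="?D1" and f''="?D2"])
         (use der1 der2 lt pos in \<open>auto intro: less_imp_le\<close>)
    thus "(\<forall>y\<ge>0. a * y < b) \<and> convex_on {0..} (xBR a b c \<theta>)
      \<and> (\<forall>y\<ge>0. deriv (deriv (xBR a b c \<theta>)) y > 0)"
      using lt pos dd by auto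
  qed
  have P3: "a > 0 \<longrightarrow>
        (\<forall>y\<ge>0. a * y < b \<longleftrightarrow> y < kappa a b)
      \<and> (zeta a b c \<theta> > 0 \<longrightarrow> concave_on {0..<kappa a b} (xBR a b c \<theta>)
            \<and> (\<forall>y\<in>{0..<kappa a b}. deriv (deriv (xBR a b c \<theta>)) y < 0))
      \<and> (zeta a b c \<theta> < 0 \<longrightarrow> convex_on {0..<kappa a b} (xBR a b c \<theta>)
            \<and> (\<forall>y\<in>{0..<kappa a b}. deriv (deriv (xBR a b c \<theta>)) y > 0))
      \<and> (zeta a b c \<theta> = 0 \<longrightarrow>
            (\<forall>y\<in>{0..<kappa a b}. deriv (deriv (xBR a b c \<theta>)) y = 0))"
  proof
    assume a: "a > 0"
    have kap: "a * y < b \<longleftrightarrow> y < kappa a b" for y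
      unfolding kappa_def using a by (simp add: pos_less_divide_eq mult.commute)
    have inK: "a*y < b" if "y \<in> {0..<kappa a b}" for y using that kap by auto
    have cv: "convex {0..<kappa a b}" by simp
    have c1: "zeta a b c \<theta> > 0 \<longrightarrow> concave_on {0..<kappa a b} (xBR a b c \<theta>)
            \<and> (\<forall>y\<in>{0..<kappa a b}. deriv (deriv (xBR a b c \<theta>)) y < 0)"
    proof
      assume "zeta a b c \<theta> > 0"
      hence num: "b^2 - a*(c-\<theta>) > 0" using zeta_pos by simp
      have neg: "?D2 y < 0" if "y \<in> {0..<kappa a b}" for y
        using cube[OF inK[OF that]] num a by (simp add: divide_pos_neg)
      have "convex_on {0..<kappa a b} (\<lambda>x. - xBR a b c \<theta> x)"
        by (rule f''_ge0_imp_convex[OF cv, where f'="\<lambda>y. - ?D1 y" and f''="\<lambda>y. - ?D2 y"])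
           (use der1n der2n inK neg in \<open>auto intro: less_imp_le\<close>)
      thus "concave_on {0..<kappa a b} (xBR a b c \<theta>)
            \<and> (\<forall>y\<in>{0..<kappa a b}. deriv (deriv (xBR a b c \<theta>)) y < 0)"
        using neg dd inK by (auto simp: concave_on_def)
    qed
    have c2: "zeta a b c \<theta> < 0 \<longrightarrow> convex_on {0..<kappa a b} (xBR a b c \<theta>)
            \<and> (\<forall>y\<in>{0..<kappa a b}. deriv (deriv (xBR a b c \<theta>)) y > 0)"
    proof
      assume "zeta a b c \<theta> < 0"
      hence num: "b^2 - a*(c-\<theta>) < 0" using zeta_neg by simp
      have pos: "?D2 y > 0" if "y \<in> {0..<kappa a b}" for y
        using cube[OF inK[OF that]] num a by (simp add: divide_neg_neg mult_pos_neg)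
      have "convex_on {0..<kappa a b} (xBR a b c \<theta>)"
        by (rule f''_ge0_imp_convex[OF cv, where f'="?D1" and f''="?D2"])
           (use der1 der2 inK pos in \<open>auto intro: less_imp_le\<close>)
      thus "convex_on {0..<kappa a b} (xBR a b c \<theta>)
            \<and> (\<forall>y\<in>{0..<kappa a b}. deriv (deriv (xBR a b c \<theta>)) y > 0)"
        using pos dd inK by auto
    qed
    have c3: "zeta a b c \<theta> = 0 \<longrightarrow>
            (\<forall>y\<in>{0..<kappa a b}. deriv (deriv (xBR a b c \<theta>)) y = 0)"
      using zeta_0 dd inK by auto
    show "(\<forall>y\<ge>0. a * y < b \<longleftrightarrow> y < kappa a b)
      \<and> (zeta a b c \<theta> > 0 \<longrightarrow> concave_on {0..<kappa a b} (xBR a b c \<theta>)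
            \<and> (\<forall>y\<in>{0..<kappa a b}. deriv (deriv (xBR a b c \<theta>)) y < 0))
      \<and> (zeta a b c \<theta> < 0 \<longrightarrow> convex_on {0..<kappa a b} (xBR a b c \<theta>)
            \<and> (\<forall>y\<in>{0..<kappa a b}. deriv (deriv (xBR a b c \<theta>)) y > 0))
      \<and> (zeta a b c \<theta> = 0 \<longrightarrow>
            (\<forall>y\<in>{0..<kappa a b}. deriv (deriv (xBR a b c \<theta>)) y = 0))"
      using kap c1 c2 c3 by blast
  qed
  show ?thesis by (rule conjI[OF P1 conjI[OF P2 P3]])
qed

end
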